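(* Let $P\subset\mathbb{R}^d$ be a full-dimensional lattice polytope with codegree $a$. Then $P$ is nearly Gorenstein if and only if \[(C_P\cap\mathbb{Z}^{d+1})\setminus\{0\} \subseteq \big(\mathrm{int}(C_P)\cap\mathbb{Z}^{d+1}\big) + \big(\mathrm{ant}(C_P)\cap \mathbb{Z}^{d+1}\big).\] In particular, if $P$ is nearly Gorenstein, then \[P\cap\mathbb{Z}^d = \big(\mathrm{int}(C_P)_a\cap\mathbb{Z}^d\big) + \big(\mathrm{ant}(C_P)_{1-a}\cap\mathbb{Z}^d\big).\] The converse of the last statement also holds if $P$ has the integer decomposition property.
   Context: $\mathbf{k}$ is an infinite field. A lattice polytope $P\subset\mathbb{R}^d$ (vertices in $\mathbb{Z}^d$, full-dimensional) has facet presentation $P=\{x\in\mathbb{R}^d : n_F(x)\ge -h_F \text{ for all facets } F\}$, where each $n_F\in(\mathbb{Z}^d)^*$ is the primitive inner normal vector and $h_F\in\mathbb{Z}$. Define $C_P=\{(x,k)\in\mathbb{R}^{d+1}: n_F(x)\ge -kh_F \ \forall F\}$, $\mathrm{int}(C_P)=\{(x,k): n_F(x)> -kh_F\ \forall F\}$, and $\mathrm{ant}(C_P)=\{(x,k): n_F(x)\ge -kh_F-1\ \forall F\}$. For $X\subseteq\mathbb{R}^{d+1}$ and $k\in\mathbb{Z}$, $X_k=\{x\in\mathbb{R}^d: (x,k)\in X\}$. The Ehrhart ring is $A(P)=\mathbf{k}[\mathbf{t}^x s^k : k\in\mathbb{N},\ x\in kP\cap\mathbb{Z}^d]$, graded by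 $\deg(\mathbf{t}^xs^k)=k$, with graded maximal ideal $\mathbf{m}$ and canonical module $\omega$. The trace of $\omega$ is $\mathrm{tr}(\omega)=\sum_{\phi\in\mathrm{Hom}(\omega,A(P))}\phi(\omega)$; $P$ is nearly Gorenstein if $\mathbf{m}\subseteq \mathrm{tr}(\omega)$. The codegree of $P$ is $a=\min\{k\in\mathbb{Z}_{\ge1}: \mathrm{int}(kP)\cap\mathbb{Z}^d\neq\varnothing\}$. $P$ has the integer decomposition property (IDP) if for every positive integer $k$ every $x\in kP\cap\mathbb{Z}^d$ is a sum of $k$ lattice points of $P$. *)

theory Defs
  imports "HOL-Analysis.Analysis" "HOL-Library.Poly_Mapping" "HOL-Library.Product_Plus"
begin

definition lat :: "int^'d \<Rightarrow> real^'d" where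
  "lat v = (\<chi> i. of_int (v $ i))"

definition lattice_polytope :: "(real^'d) set \<Rightarrow> bool" where
  "lattice_polytope P \<longleftrightarrow> (\<exists>V. finite V \<and> P = convex hull (lat ` V))"

definition full_dimensional :: "(real^'d) set \<Rightarrow> bool" where
  "full_dimensional P \<longleftrightarrow> aff_dim P = int CARD('d)"

definition primitive :: "int^'d \<Rightarrow> bool" where
  "primitive n \<longleftrightarrow> (\<forall>m::int. (\<forall>i. m dvd n $ i) \<longrightarrow> \<bar>m\<bar> = 1)"

definition facet_normal :: "(real^'d) set \<Rightarrow> (real^'d) set \<Rightarrow> int^'d \<Rightarrow> int \<Rightarrow> bool" where
  "facet_normal P F n h \<longleftrightarrow> F facet_of P \<and> primitive n \<and>
     (\<forall>x\<in>P. lat n \<bullet> x \<ge> - of_int h) \<and> F = {x\<in>P. lat n \<bullet> x = - of_int h}"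

definition cone_P :: "(real^'d) set \<Rightarrow> ((real^'d) \<times> real) set" where
  "cone_P P = {(x,k). \<forall>F n h. facet_normal P F n h \<longrightarrow> lat n \<bullet> x \<ge> - k * of_int h}"

definition int_cone_P :: "(real^'d) set \<Rightarrow> ((real^'d) \<times> real) set" where
  "int_cone_P P = {(x,k). \<forall>F n h. facet_normal P F n h \<longrightarrow> lat n \<bullet> x > - k * of_int h}"

definition ant_cone_P :: "(real^'d) set \<Rightarrow> ((real^'d) \<times> real) set" where
  "ant_cone_P P = {(x,k). \<forall>F n h. facet_normal P F n h \<longrightarrow> lat n \<bullet> x \<ge> - k * of_int h - 1}"

definition lat_pts :: "((real^'d) \<times> real) set \<Rightarrow> ((int^'d) \<times> int) set" where
  "lat_pts X = {(v,k). (lat v, of_int k) \<in> X}"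

definition slice_lat :: "((real^'d) \<times> real) set \<Rightarrow> int \<Rightarrow> (int^'d) set" where
  "slice_lat X k = {v. (lat v, of_int k) \<in> X}"

definition codegree :: "(real^'d) set \<Rightarrow> nat" where
  "codegree P = (LEAST k::nat. k \<ge> 1 \<and> (\<exists>v. lat v \<in> interior ((\<lambda>x. real k *\<^sub>R x) ` P)))"

definition IDP :: "(real^'d) set \<Rightarrow> bool" where
  "IDP P \<longleftrightarrow> (\<forall>k::nat. k \<ge> 1 \<longrightarrow> (\<forall>v. lat v \<in> (\<lambda>x. real k *\<^sub>R x) ` P \<longrightarrow>
      (\<exists>u :: nat \<Rightarrow> int^'d. (\<forall>i<k. lat (u i) \<in> P) \<and> v = (\<Sum>i<k. u i))))"

text \<open>Laurent polynomials in t_1..t_d, s over 'k: finitely supported functions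
  Z^d \<times> Z \<Rightarrow> 'k with convolution product; the monomial t^x s^k is Poly_Mapping.single (x,k) 1.\<close>
type_synonym ('d,'k) laurent = "((int^'d) \<times> int) \<Rightarrow>\<^sub>0 'k"

text \<open>A(P) = k[t^x s^k : k \<in> N, x \<in> kP \<inter> Z^d]; since these exponents form a monoid,
  this is the k-span of these monomials.\<close>
definition ehrhart_ring :: "'k itself \<Rightarrow> (real^'d) set \<Rightarrow> ('d,'k::field) laurent set" where
  "ehrhart_ring _ P = {f. Poly_Mapping.keys f \<subseteq> {(v,k). k \<ge> 0 \<and> lat v \<in> (\<lambda>x. real_of_int k *\<^sub>R x) ` P}}"

definition max_ideal :: "'k itself \<Rightarrow> (real^'d) set \<Rightarrow> ('d,'k::field) laurent set" where
  "max_ideal T P = {f \<in> ehrhart_ring T P. \<forall>(v,k)\<in>Poly_Mapping.keys f. k > 0}"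

text \<open>Canonical module of the normal Ehrhart ring (Danilov-Stanley): the ideal of A(P)
  spanned by the monomials of int(C_P) \<inter> Z^{d+1}.\<close>
definition canonical_module :: "'k itself \<Rightarrow> (real^'d) set \<Rightarrow> ('d,'k::field) laurent set" where
  "canonical_module _ P = {f. Poly_Mapping.keys f \<subseteq> lat_pts (int_cone_P P)}"

text \<open>Hom_{A}(\<omega>, A): A-linear maps from \<omega> to A (values outside \<omega> irrelevant).\<close>
definition hom_omega :: "'k itself \<Rightarrow> (real^'d) set \<Rightarrow> (('d,'k::field) laurent \<Rightarrow> ('d,'k) laurent) set" where
  "hom_omega T P = {\<phi>. (\<forall>w\<in>canonical_module T P. \<phi> w \<in> ehrhart_ring T P) \<and>
      (\<forall>w1\<in>canonical_module T P. \<forall>w2\<in>canonical_module T P. \<phi> (w1 + w2) = \<phi> w1 + \<phi> w2) \<and>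
      (\<forall>a\<in>ehrhart_ring T P. \<forall>w\<in>canonical_module T P. \<phi> (a * w) = a * \<phi> w)}"

definition trace_omega :: "'k itself \<Rightarrow> (real^'d) set \<Rightarrow> ('d,'k::field) laurent set" where
  "trace_omega T P = {(\<Sum>i<(N::nat). \<phi> i (w i)) | N \<phi> w.
      \<forall>i<N. \<phi> i \<in> hom_omega T P \<and> w i \<in> canonical_module T P}"

definition nearly_gorenstein :: "'k::field itself \<Rightarrow> (real^'d) set \<Rightarrow> bool" where
  "nearly_gorenstein T P \<longleftrightarrow> max_ideal T P \<subseteq> trace_omega T P"

end

theory Submission
  imports Defs
begin

definition lfun :: "int^'d \<Rightarrow> int \<Rightarrow> ((int^'d) \<times> int) \<Rightarrow> real" where
  "lfun n h z = lat n \<bullet> lat (fst z) + of_int (snd z) * of_int h"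

lemma lat_add: "lat (a + b) = lat a + lat b"
  by (simp add: lat_def vec_eq_iff)

lemma lat_uminus: "lat (- a) = - lat a"
  by (simp add: lat_def vec_eq_iff)

lemma lat_diff: "lat (a - b) = lat a - lat b"
  by (simp add: lat_def vec_eq_iff)

lemma lat_zero [simp]: "lat 0 = 0"
  by (simp add: lat_def vec_eq_iff)

lemma lat_inner: "lat n \<bullet> lat v = of_int (\<Sum>i\<in>UNIV. n $ i * v $ i)"
  by (simp add: lat_def inner_vec_def)

lemma lfun_add: "lfun n h (z1 + z2) = lfun n h z1 + lfun n h z2"
  by (simp add: lfun_def lat_add inner_add_right algebra_simps)

lemma lfun_int: "lfun n h z \<in> \<int>"
  unfolding lfun_def lat_inner by (intro Ints_add Ints_mult Ints_of_int)

lemma lfun_zero [simp]: "lfun n h 0 = 0"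
  by (simp add: lfun_def)

lemma int_gt0_ge1: "(x::real) \<in> \<int> \<Longrightarrow> x > 0 \<Longrightarrow> x \<ge> 1"
  by (auto elim!: Ints_cases)

lemma aux_ineq: "((- (x::real)) \<le> y) = (0 \<le> y + x)" "((- (x::real)) < y) = (0 < y + x)"
   "((- (x::real)) - 1 \<le> y) = (-1 \<le> y + x)"
  by linarith+

lemma cone_pts: "z \<in> lat_pts (cone_P P) \<longleftrightarrow> (\<forall>F n h. facet_normal P F n h \<longrightarrow> lfun n h z \<ge> 0)"
  by (cases z) (auto simp: lat_pts_def cone_P_def lfun_def aux_ineq)

lemma int_pts: "z \<in> lat_pts (int_cone_P P) \<longleftrightarrow> (\<forall>F n h. facet_normal P F n h \<longrightarrow> lfun n h z > 0)"
  by (cases z) (auto simp: lat_pts_def int_cone_P_def lfun_def aux_ineq)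

lemma int_pts_ge1: "z \<in> lat_pts (int_cone_P P) \<longleftrightarrow> (\<forall>F n h. facet_normal P F n h \<longrightarrow> lfun n h z \<ge> 1)"
  unfolding int_pts by (meson int_gt0_ge1 lfun_int less_le_trans zero_less_one)

lemma ant_pts: "z \<in> lat_pts (ant_cone_P P) \<longleftrightarrow> (\<forall>F n h. facet_normal P F n h \<longrightarrow> lfun n h z \<ge> -1)"
  by (cases z) (auto simp: lat_pts_def ant_cone_P_def lfun_def aux_ineq)

lemma int_ant_cone: "p \<in> lat_pts (int_cone_P P) \<Longrightarrow> q \<in> lat_pts (ant_cone_P P) \<Longrightarrow> p + q \<in> lat_pts (cone_P P)"
  unfolding int_pts_ge1 ant_pts cone_pts lfun_add by (smt (verit))

lemma ant_cone_ant: "q \<in> lat_pts (ant_cone_P P) \<Longrightarrow> c \<in> lat_pts (cone_P P) \<Longrightarrow> q + c \<in> lat_pts (ant_cone_P P)"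
  unfolding ant_pts cone_pts lfun_add by (smt (verit))

lemma cone_cone: "c \<in> lat_pts (cone_P P) \<Longrightarrow> c' \<in> lat_pts (cone_P P) \<Longrightarrow> c + c' \<in> lat_pts (cone_P P)"
  unfolding cone_pts lfun_add by (smt (verit))

lemma int_cone: "p \<in> lat_pts (int_cone_P P) \<Longrightarrow> p \<in> lat_pts (cone_P P)"
  unfolding int_pts cone_pts by (meson less_imp_le)

lemma zero_cone: "0 \<in> lat_pts (cone_P P)"
  unfolding cone_pts by simp

lemma poly_mapping_monomials:
  "(f :: ('a::monoid_add) \<Rightarrow>\<^sub>0 ('b::comm_ring_1)) = (\<Sum>z\<in>Poly_Mapping.keys f. Poly_Mapping.single z (Poly_Mapping.lookup f z))"
proof (rule poly_mapping_eqI)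
  fix k
  show "Poly_Mapping.lookup f k = Poly_Mapping.lookup (\<Sum>z\<in>Poly_Mapping.keys f. Poly_Mapping.single z (Poly_Mapping.lookup f z)) k"
    by (cases "k \<in> Poly_Mapping.keys f")
       (auto simp: lookup_sum lookup_single when_def in_keys_iff)
qed

lemma keys_single_mult:
  "Poly_Mapping.keys (Poly_Mapping.single a c * (f :: ('a::monoid_add) \<Rightarrow>\<^sub>0 ('b::comm_ring_1))) \<subseteq> (\<lambda>b. a + b) ` Poly_Mapping.keys f"
  using keys_mult[of "Poly_Mapping.single a c" f] by (auto split: if_splits)

lemma lookup_single_mult:
  "Poly_Mapping.lookup (Poly_Mapping.single a 1 * (f :: ('a::ab_group_add) \<Rightarrow>\<^sub>0 ('b::comm_ring_1))) (a + z) = Poly_Mapping.lookup f z"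
proof -
  have "Poly_Mapping.single a 1 * f = (\<Sum>y\<in>Poly_Mapping.keys f. Poly_Mapping.single (a + y) (Poly_Mapping.lookup f y))"
    by (subst poly_mapping_monomials[of f]) (simp add: sum_distrib_left mult_single)
  also have "Poly_Mapping.lookup \<dots> (a + z) = (\<Sum>y\<in>Poly_Mapping.keys f. (Poly_Mapping.lookup f y when y = z))"
    by (simp add: lookup_sum lookup_single)
  also have "\<dots> = Poly_Mapping.lookup f z"
    by (cases "z \<in> Poly_Mapping.keys f") (auto simp: when_def in_keys_iff)
  finally show ?thesis .
qed

lemma det_Ints:
  fixes A :: "real^'n^'n"
  assumes "\<And>i j. A$i$j \<in> \<int>"
  shows "det A \<in> \<int>"
  unfolding det_def using assms by (intro Ints_sum Ints_mult Ints_prod Ints_of_int) auto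

lemma Basis_vec_Ints:
  fixes v :: "real^'n"
  assumes "v \<in> Basis"
  shows "v $ j \<in> \<int>"
  using assms by (auto simp: Basis_vec_def axis_def)

lemma lat_Ints: "lat w $ j \<in> \<int>"
  by (simp add: lat_def)

lemma Ints_floor: "(x::real) \<in> \<int> \<Longrightarrow> of_int \<lfloor>x\<rfloor> = x"
  by (auto elim!: Ints_cases)

lemma int_orth:
  fixes W :: "(int^'d) set"
  assumes fin: "finite W" and sp: "span (lat ` W) \<noteq> UNIV"
  shows "\<exists>n::int^'d. n \<noteq> 0 \<and> (\<forall>w\<in>W. lat n \<bullet> lat w = 0)"
proof -
  obtain B0 where B0: "B0 \<subseteq> lat ` W" "independent B0" "lat ` W \<subseteq> span B0"
    using maximal_independent_subset[of "lat ` W"] by blast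
  obtain B where B: "B0 \<subseteq> B" "B \<subseteq> B0 \<union> Basis" "independent B" "B0 \<union> Basis \<subseteq> span B"
    using maximal_independent_subset_extend[of B0 "B0 \<union> Basis"] B0(2) by blast
  have spB: "span B = UNIV"
    by (metis B(4) span_Basis span_mono span_span subset_UNIV subset_antisym le_sup_iff)
  have finB: "finite B" using B(2) B0(1) fin finite_subset by (meson finite_Basis finite_UnI finite_imageI)
  have cardB: "card B = CARD('d)"
    using basis_card_eq_dim[of B UNIV] B(3) spB by simp
  have "B \<noteq> B0"
  proof
    assume "B = B0"
    then have "span (lat ` W) = UNIV"
      using spB B0 by (metis span_minimal span_mono span_span subset_antisym subspace_span top_greatest)
    with sp show False by simp
  qed
  then obtain e where eB: "e \<in> B" and eB0: "e \<notin> B0" using B(1) by blast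
  obtain g where g: "bij_betw g (UNIV::'d set) B"
    using finite_same_card_bij[of "UNIV::'d set" B] finB cardB by auto
  define M :: "real^'d^'d" where "M = (\<chi> i. g i)"
  have rowM: "M $ i = g i" for i by (simp add: M_def)
  have detM: "det M \<noteq> 0"
  proof -
    have "\<forall>c. (\<Sum>i\<in>UNIV. c i *s row i M) = 0 \<longrightarrow> (\<forall>i. c i = 0)"
    proof (intro allI impI)
      fix c :: "'d \<Rightarrow> real" and i
      assume c: "(\<Sum>i\<in>UNIV. c i *s row i M) = 0"
      define c' where "c' v = c (inv_into UNIV g v)" for v
      have "(\<Sum>v\<in>B. c' v *\<^sub>R v) = (\<Sum>i\<in>UNIV. c' (g i) *\<^sub>R g i)"
        using sum.reindex_bij_betw[OF g, of "\<lambda>v. c' v *\<^sub>R v"] by simp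
      also have "\<dots> = (\<Sum>i\<in>UNIV. c i *s row i M)"
        using g by (intro sum.cong) (auto simp: c'_def bij_betw_inv_into_left row_def rowM scalar_mult_eq_scaleR vec_lambda_eta)
      finally have "(\<Sum>v\<in>B. c' v *\<^sub>R v) = 0" using c by simp
      then have "\<forall>v\<in>B. c' v = 0" using B(3) unfolding independent_explicit by blast
      then have "c' (g i) = 0" using g bij_betwE by blast
      then show "c i = 0" using g by (simp add: c'_def bij_betw_inv_into_left)
    qed
    then have "\<exists>M'. M ** M' = mat 1" by (simp add: matrix_right_invertible_independent_rows)
    then show ?thesis using invertible_det_nz invertible_right_inverse by blast
  qed
  define t :: "real^'d" where "t = (\<chi> i. if g i = e then 1 else 0)"
  define Mk where "Mk k = (\<chi> i j. if j = k then t$i else M$i$j)" for k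
  define x :: "real^'d" where "x = (\<chi> k. det (Mk k) / det M)"
  have Mx: "M *v x = t" using cramer[OF detM, of x t] by (simp add: x_def Mk_def)
  have Mint: "M $ i $ j \<in> \<int>" for i j
  proof -
    have "g i \<in> B" using g bij_betwE by blast
    then have "g i \<in> lat ` W \<or> g i \<in> Basis" using B(2) B0(1) by blast
    then show ?thesis using Basis_vec_Ints lat_Ints by (auto simp: rowM)
  qed
  have Mkint: "det (Mk k) \<in> \<int>" for k
    by (rule det_Ints) (auto simp: Mk_def t_def Mint)
  define n :: "int^'d" where "n = (\<chi> k. \<lfloor>det (Mk k)\<rfloor>)"
  have latn: "lat n = det M *\<^sub>R x"
    by (simp add: lat_def n_def x_def vec_eq_iff Ints_floor[OF Mkint] detM)
  have "n \<noteq> 0"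
  proof
    assume "n = 0"
    then have "det M *\<^sub>R x = 0" using latn by simp
    then have "x = 0" using detM by simp
    then have "t = 0" using Mx by simp
    moreover obtain i where "g i = e" using g eB by (metis bij_betw_imp_surj_on imageE)
    then have "t $ i = 1" by (simp add: t_def)
    ultimately show False by simp
  qed
  moreover have "\<forall>w\<in>W. lat n \<bullet> lat w = 0"
  proof
    fix w assume w: "w \<in> W"
    have orth: "b \<bullet> x = 0" if b: "b \<in> B0" for b
    proof -
      obtain i where gi: "g i = b" using g b B(1) by (metis bij_betw_imp_surj_on imageE subsetD)
      have "t $ i = 0" using gi eB0 b by (auto simp: t_def)
      then have "(M *v x) $ i = 0" using Mx by simp
      then show ?thesis using gi by (simp add: matrix_vector_mult_def inner_vec_def rowM)
    qed
    have "span B0 \<subseteq> {y. y \<bullet> x = 0}"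
      by (rule span_minimal) (use orth subspace_hyperplane2 in auto)
    then have "lat w \<bullet> x = 0" using B0(3) w by auto
    then show "lat n \<bullet> lat w = 0" by (simp add: latn inner_commute)
  qed
  ultimately show ?thesis by blast
qed

lemma primitive_nonzero: "primitive n \<Longrightarrow> n \<noteq> 0"
  unfolding primitive_def by (metis abs_numeral dvd_0_right numeral_eq_one_iff semiring_norm(85) zero_index)

lemma primitive_uminus: "primitive n \<Longrightarrow> primitive (- n)"
  unfolding primitive_def by simp

lemma primitive_exists:
  fixes n :: "int^'d"
  assumes "n \<noteq> 0"
  shows "\<exists>n' g. primitive n' \<and> g \<noteq> 0 \<and> n = g *s n'"
proof -
  define G where "G = Gcd (range (\<lambda>i. n$i))"
  have Gd: "G dvd n$i" for i unfolding G_def by (rule Gcd_dvd) auto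
  have "G \<noteq> 0" using assms unfolding G_def by (auto simp: vec_eq_iff)
  define n' where "n' = (\<chi> i. n$i div G)"
  have eq: "n = G *s n'" using Gd by (simp add: n'_def vec_eq_iff)
  have "primitive n'"
    unfolding primitive_def
  proof (intro allI impI)
    fix m :: int assume m: "\<forall>i. m dvd n' $ i"
    have "m * G dvd n $ i" for i
      using m eq by (metis mult_dvd_mono dvd_refl vector_smult_component mult.commute)
    then have "m * G dvd G" unfolding G_def by (intro Gcd_greatest) auto
    then have "m dvd 1" using \<open>G \<noteq> 0\<close> by (metis dvd_mult_cancel_right mult_1 mult.commute)
    then show "\<bar>m\<bar> = 1" by simp
  qed
  then show ?thesis using eq \<open>G \<noteq> 0\<close> by blast
qed

lemma primitive_bezout:
  fixes n :: "int^'d"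
  assumes pn: "primitive n"
  shows "\<exists>x::int^'d. (\<Sum>i\<in>UNIV. n$i * x$i) = 1"
proof -
  define I where "I = range (\<lambda>x::int^'d. \<Sum>i\<in>UNIV. n$i * x$i)"
  have Isub: "a - c * b \<in> I" if "a \<in> I" "b \<in> I" for a b c
  proof -
    from that obtain x y where "a = (\<Sum>i\<in>UNIV. n$i * x$i)" "b = (\<Sum>i\<in>UNIV. n$i * y$i)" unfolding I_def by blast
    then have "a - c * b = (\<Sum>i\<in>UNIV. n$i * (x - c *s y)$i)"
      by (simp add: algebra_simps sum_subtractf sum_distrib_left)
    then show ?thesis unfolding I_def by blast
  qed
  have In: "n$j \<in> I" for j
  proof -
    have "(\<Sum>i\<in>UNIV. n$i * (axis j 1 :: int^'d)$i) = (\<Sum>i\<in>UNIV. if i = j then n$i else 0)"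
      by (rule sum.cong) (auto simp: axis_def)
    also have "\<dots> = n$j" by simp
    finally have "(\<Sum>i\<in>UNIV. n$i * (axis j 1 :: int^'d)$i) = n$j" .
    then show ?thesis unfolding I_def by (intro range_eqI[of _ _ "axis j 1"]) simp
  qed
  have I0: "0 \<in> I" unfolding I_def by (intro range_eqI[of _ _ 0]) simp
  obtain j where "n$j \<noteq> 0" using primitive_nonzero[OF pn] by (auto simp: vec_eq_iff)
  have absI: "\<bar>a\<bar> \<in> I" if "a \<in> I" for a
    using Isub[OF I0 that, of 1] that by (cases "a \<ge> 0") auto
  define Q where "Q = (\<lambda>k::nat. k > 0 \<and> int k \<in> I)"
  have "Q (nat \<bar>n$j\<bar>)" unfolding Q_def using \<open>n$j \<noteq> 0\<close> absI[OF In] by simp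
  define g where "g = (LEAST k. Q k)"
  have Qg: "Q g" unfolding g_def by (rule LeastI[of Q, OF \<open>Q (nat \<bar>n$j\<bar>)\<close>])
  have gmin: "\<not> Q k" if "k < g" for k using that unfolding g_def by (rule not_less_Least)
  have gdvd: "int g dvd n$i" for i
  proof -
    have gpos: "int g > 0" and gI: "int g \<in> I" using Qg unfolding Q_def by auto
    have r: "n$i mod int g \<in> I" using Isub[OF In[of i] gI, of "n$i div int g"]
      by (metis minus_mult_div_eq_mod mult.commute)
    have "n$i mod int g = 0"
    proof (rule ccontr)
      assume ne: "n$i mod int g \<noteq> 0"
      have "n$i mod int g \<ge> 0" "n$i mod int g < int g" using gpos by auto
      then have "Q (nat (n$i mod int g))" "nat (n$i mod int g) < g" using ne r unfolding Q_def by auto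
      with gmin show False by blast
    qed
    then show ?thesis by auto
  qed
  have "\<bar>int g\<bar> = 1" using pn gdvd unfolding primitive_def by blast
  then have "int g = 1" by simp
  moreover have "int g \<in> I" using Qg unfolding Q_def by auto
  ultimately show ?thesis unfolding I_def by auto
qed

lemma hyperplane_prop:
  fixes a c :: "'a::euclidean_space"
  assumes a: "a \<noteq> 0" and eq: "{x. c \<bullet> x = e} = {x. a \<bullet> x = b}"
  shows "\<exists>\<mu>. c = \<mu> *\<^sub>R a \<and> e = \<mu> * b"
proof -
  define x0 where "x0 = (b / (a \<bullet> a)) *\<^sub>R a"
  have ax0: "a \<bullet> x0 = b" using a by (simp add: x0_def)
  have cy: "c \<bullet> y = 0" if "a \<bullet> y = 0" for y
  proof -
    have "x0 \<in> {x. a \<bullet> x = b}" "x0 + y \<in> {x. a \<bullet> x = b}" using ax0 that by (auto simp: inner_add_right)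
    then have "c \<bullet> x0 = e" "c \<bullet> (x0 + y) = e" using eq by blast+
    then show ?thesis by (simp add: inner_add_right)
  qed
  define \<mu> where "\<mu> = (c \<bullet> a) / (a \<bullet> a)"
  define d where "d = c - \<mu> *\<^sub>R a"
  have "a \<bullet> d = 0" using a by (simp add: d_def \<mu>_def inner_diff_right inner_commute)
  then have "c \<bullet> d = 0" by (rule cy)
  then have "d \<bullet> d = 0" using \<open>a \<bullet> d = 0\<close> by (simp add: d_def inner_diff_left)
  then have "c = \<mu> *\<^sub>R a" by (simp add: d_def)
  moreover have "e = \<mu> * b"
  proof -
    have "x0 \<in> {x. a \<bullet> x = b}" using ax0 by simp
    then have "c \<bullet> x0 = e" using eq by blast
    then show ?thesis using \<open>c = \<mu> *\<^sub>R a\<close> ax0 by simp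
  qed
  ultimately show ?thesis by blast
qed

lemma hyp_affine_hull:
  fixes S :: "(real^'d) set"
  assumes sub: "S \<subseteq> {x. c \<bullet> x = e}" and c: "c \<noteq> 0" and ad: "aff_dim S = int CARD('d) - 1"
  shows "affine hull S = {x. c \<bullet> x = e}"
proof (rule ccontr)
  assume ne: "affine hull S \<noteq> {x. c \<bullet> x = e}"
  have s1: "affine hull S \<subseteq> {x. c \<bullet> x = e}" using sub affine_hyperplane[of c e] by (rule hull_minimal)
  have s2: "affine hull {x. c \<bullet> x = e} = {x. c \<bullet> x = e}"
    using affine_hyperplane[of c e] by (rule affine_hull_eq[THEN iffD2])
  have "affine hull S \<subset> affine hull {x. c \<bullet> x = e}" unfolding s2 using s1 ne by (rule psubsetI)
  then have "aff_dim S < aff_dim {x. c \<bullet> x = e}" by (rule aff_dim_psubset)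
  then show False using ad c by simp
qed

lemma lat_smult: "lat (c *s v) = of_int c *\<^sub>R lat v"
  by (simp add: lat_def vec_eq_iff)

lemma lat_eq0: "lat v = 0 \<Longrightarrow> v = 0"
  by (simp add: lat_def vec_eq_iff)

lemma lat_sum: "lat (sum f S) = (\<Sum>x\<in>S. lat (f x))"
  by (induction S rule: infinite_finite_induct) (auto simp: lat_add)

context
  fixes P :: "(real^'d) set"
  assumes lp: "lattice_polytope P" and fd: "full_dimensional P"
begin

lemma P_polytope: "polytope P"
  using lp unfolding lattice_polytope_def polytope_def by blast

lemma P_aff: "aff_dim P = int CARD('d)"
  using fd unfolding full_dimensional_def .

lemma P_ne: "P \<noteq> {}"
  using P_aff by auto

lemma P_hull: "affine hull P = UNIV"
  using P_aff aff_dim_eq_full[of P] by simp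

lemma P_poly: "polyhedron P" using P_polytope by (rule polytope_imp_polyhedron)
lemma P_conv: "convex P" using P_polytope by (rule polytope_imp_convex)
lemma P_bdd: "bounded P" using P_polytope by (rule polytope_imp_bounded)

lemma facet_aff: "G facet_of P \<Longrightarrow> aff_dim G = int CARD('d) - 1"
  unfolding facet_of_def using P_aff by simp

lemma rep_exists:
  "\<exists>Fs a b. finite Fs \<and> P = \<Inter>Fs \<and> (\<forall>h\<in>Fs. a h \<noteq> 0 \<and> h = {x. a h \<bullet> x \<le> b h}) \<and>
     (\<forall>C. C facet_of P \<longleftrightarrow> (\<exists>h\<in>Fs. C = P \<inter> {x. a h \<bullet> x = b h})) \<and>
     interior P = {x\<in>P. \<forall>h\<in>Fs. a h \<bullet> x < b h}"
proof -
  obtain F where "finite F" and seq: "P = affine hull P \<inter> \<Inter>F"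
             and faces: "\<And>h. h \<in> F \<Longrightarrow> \<exists>a b. a \<noteq> 0 \<and> h = {x. a \<bullet> x \<le> b}"
             and min: "\<And>F'. F' \<subset> F \<Longrightarrow> P \<subset> (affine hull P) \<inter> \<Inter>F'"
    using P_poly by (simp add: polyhedron_Int_affine_minimal) meson
  then obtain a b where ab: "\<And>h. h \<in> F \<Longrightarrow> a h \<noteq> 0 \<and> h = {x. a h \<bullet> x \<le> b h}"
    by metis
  have facet: "(c facet_of P) \<longleftrightarrow> (\<exists>h. h \<in> F \<and> c = P \<inter> {x. a h \<bullet> x = b h})" for c
    by (rule facet_of_polyhedron_explicit [OF \<open>finite F\<close> seq ab min])
  have rel: "rel_interior P = {x \<in> P. \<forall>h\<in>F. a h \<bullet> x < b h}"
    by (rule rel_interior_polyhedron_explicit [OF \<open>finite F\<close> seq ab min])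
  have e1: "P = \<Inter>F" using seq P_hull by simp
  have e2: "interior P = {x \<in> P. \<forall>h\<in>F. a h \<bullet> x < b h}"
    using rel rel_interior_interior[OF P_hull] by simp
  have e3: "\<forall>h\<in>F. a h \<noteq> 0 \<and> h = {x. a h \<bullet> x \<le> b h}" using ab by blast
  have e4: "\<forall>C. C facet_of P \<longleftrightarrow> (\<exists>h\<in>F. C = P \<inter> {x. a h \<bullet> x = b h})" using facet by blast
  show ?thesis
    by (rule exI[of _ F], rule exI[of _ a], rule exI[of _ b]) (intro conjI \<open>finite F\<close> e1 e2 e3 e4)
qed

lemma FN_from:
  assumes pn: "primitive n" and G: "G facet_of P" and a: "a \<noteq> 0" and Pa: "P \<subseteq> {x. a \<bullet> x \<le> b}"
    and Ga: "G = P \<inter> {x. a \<bullet> x = b}" and l: "t > 0" and ln: "lat n = (-t) *\<^sub>R a" and lh: "of_int h = t * b"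
  shows "facet_normal P G n h"
proof -
  have "lat n \<bullet> x \<ge> - of_int h \<longleftrightarrow> a \<bullet> x \<le> b" for x
    using l by (simp add: ln lh)
  moreover have "lat n \<bullet> x = - of_int h \<longleftrightarrow> a \<bullet> x = b" for x
    using l by (simp add: ln lh)
  ultimately show ?thesis unfolding facet_normal_def using pn G Pa Ga by auto
qed

lemma FN_prop:
  assumes fn: "facet_normal P G n h" and a: "a \<noteq> 0" and Pa: "P \<subseteq> {x. a \<bullet> x \<le> b}"
    and Ga: "G = P \<inter> {x. a \<bullet> x = b}"
  shows "\<exists>t>0. lat n = (-t) *\<^sub>R a \<and> of_int h = t * b"
proof -
  have G: "G facet_of P" and pn: "primitive n" and Pn: "\<forall>x\<in>P. lat n \<bullet> x \<ge> - of_int h"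
    and Gn: "G = {x\<in>P. lat n \<bullet> x = - of_int h}"
    using fn unfolding facet_normal_def by auto
  have ln0: "lat n \<noteq> 0" using primitive_nonzero[OF pn] lat_eq0 by blast
  have adG: "aff_dim G = int CARD('d) - 1" by (rule facet_aff[OF G])
  have "affine hull G = {x. lat n \<bullet> x = - of_int h}"
    by (rule hyp_affine_hull[OF _ ln0 adG]) (use Gn in auto)
  moreover have "affine hull G = {x. a \<bullet> x = b}"
    by (rule hyp_affine_hull[OF _ a adG]) (use Ga in auto)
  ultimately have "{x. lat n \<bullet> x = - of_int h} = {x. a \<bullet> x = b}" by simp
  then obtain \<mu> where mu: "lat n = \<mu> *\<^sub>R a" "- of_int h = \<mu> * b"
    using hyperplane_prop[OF a] by blast
  have "\<mu> \<noteq> 0" using ln0 mu by auto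
  moreover have "\<not> \<mu> > 0"
  proof
    assume mpos: "\<mu> > 0"
    have "P \<subseteq> {x. a \<bullet> x = b}"
    proof
      fix x assume x: "x \<in> P"
      have "\<mu> * (a \<bullet> x) \<ge> \<mu> * b" using Pn x mu by auto
      then have "a \<bullet> x \<ge> b" using mpos by simp
      then show "x \<in> {x. a \<bullet> x = b}" using Pa x by force
    qed
    then have "aff_dim P \<le> aff_dim {x. a \<bullet> x = b}" by (rule aff_dim_subset)
    then show False using a P_aff by simp
  qed
  ultimately have "\<mu> < 0" by linarith
  then show ?thesis using mu by (intro exI[of _ "-\<mu>"]) auto
qed

lemma FN_exists:
  assumes G: "G facet_of P"
  shows "\<exists>n h. facet_normal P G n h"
proof -
  obtain V where finV: "finite V" and PV: "P = convex hull (lat ` V)"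
    using lp unfolding lattice_polytope_def by blast
  obtain S' where S': "S' \<subseteq> lat ` V" "G = convex hull S'"
    using face_of_convex_hull_subset[of "lat ` V" G] finV G PV
    by (metis facet_of_imp_face_of finite_imageI finite_imp_compact)
  obtain a b where a: "a \<noteq> 0" and Pa: "P \<subseteq> {x. a \<bullet> x \<le> b}" and Ga: "G = P \<inter> {x. a \<bullet> x = b}"
    using facet_of_polyhedron[OF P_poly G] by blast
  have "G \<noteq> {}" using G unfolding facet_of_def by blast
  then obtain s0 where s0: "s0 \<in> S'" using S' by auto
  have "s0 \<in> lat ` V" using S'(1) s0 by (rule subsetD)
  then obtain v0 where v0: "v0 \<in> V" "s0 = lat v0" by (rule imageE) auto
  have S'G: "S' \<subseteq> G" unfolding S'(2) by (rule hull_subset)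
  define W where "W = (\<lambda>v. v - v0) ` {v\<in>V. lat v \<in> S'}"
  have finW: "finite W" using finV unfolding W_def by simp
  have latW: "lat ` W \<subseteq> {y. a \<bullet> y = 0}"
  proof
    fix y assume "y \<in> lat ` W"
    then obtain v where v: "v \<in> V" "lat v \<in> S'" "y = lat (v - v0)" unfolding W_def by blast
    have "a \<bullet> lat v = b" "a \<bullet> lat v0 = b" using v s0 v0 S'G Ga by auto
    then show "y \<in> {y. a \<bullet> y = 0}" using v by (simp add: lat_diff inner_diff_right)
  qed
  have "span (lat ` W) \<subseteq> {y. a \<bullet> y = 0}"
    by (rule span_minimal[OF latW subspace_hyperplane])
  moreover have "a \<notin> {y. a \<bullet> y = 0}" using a by simp
  ultimately have "span (lat ` W) \<noteq> UNIV" by blast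
  then obtain n0 where n0: "n0 \<noteq> 0" "\<forall>w\<in>W. lat n0 \<bullet> lat w = 0"
    using int_orth[OF finW] by blast
  define c0 where "c0 = lat n0 \<bullet> lat v0"
  have "S' \<subseteq> {x. lat n0 \<bullet> x = c0}"
  proof
    fix s assume s: "s \<in> S'"
    have "s \<in> lat ` V" using S'(1) s by (rule subsetD)
    then obtain v where v: "v \<in> V" "s = lat v" by (rule imageE) auto
    have "v - v0 \<in> W" using v s unfolding W_def by blast
    then have "lat n0 \<bullet> lat (v - v0) = 0" using n0 by blast
    then show "s \<in> {x. lat n0 \<bullet> x = c0}" using v by (simp add: c0_def lat_diff inner_diff_right)
  qed
  then have Gn0: "G \<subseteq> {x. lat n0 \<bullet> x = c0}"
    unfolding S'(2) by (rule hull_minimal) (rule convex_hyperplane)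
  have ln0: "lat n0 \<noteq> 0" using n0 lat_eq0 by blast
  have adG: "aff_dim G = int CARD('d) - 1" by (rule facet_aff[OF G])
  have "affine hull G = {x. lat n0 \<bullet> x = c0}" by (rule hyp_affine_hull[OF Gn0 ln0 adG])
  moreover have "affine hull G = {x. a \<bullet> x = b}"
    by (rule hyp_affine_hull[OF _ a adG]) (use Ga in auto)
  ultimately have "{x. lat n0 \<bullet> x = c0} = {x. a \<bullet> x = b}" by simp
  then obtain \<mu> where mu: "lat n0 = \<mu> *\<^sub>R a" "c0 = \<mu> * b"
    using hyperplane_prop[OF a] by blast
  obtain n1 g where n1: "primitive n1" "g \<noteq> 0" "n0 = g *s n1"
    using primitive_exists[OF n0(1)] by blast
  define \<nu> where "\<nu> = \<mu> / of_int g"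
  have ln1: "lat n1 = \<nu> *\<^sub>R a"
  proof -
    have eq: "of_int g *\<^sub>R lat n1 = \<mu> *\<^sub>R a" using mu n1 by (simp add: lat_smult)
    have "lat n1 = (1 / of_int g) *\<^sub>R (of_int g *\<^sub>R lat n1)" using n1(2) by simp
    also have "\<dots> = (1 / of_int g) *\<^sub>R (\<mu> *\<^sub>R a)" by (simp only: eq)
    also have "\<dots> = \<nu> *\<^sub>R a" by (simp add: \<nu>_def)
    finally show ?thesis .
  qed
  define c1 where "c1 = (\<Sum>i\<in>UNIV. n1$i * v0$i)"
  have c1: "of_int c1 = \<nu> * b"
  proof -
    have "of_int c1 = lat n1 \<bullet> lat v0" by (simp add: c1_def lat_inner)
    also have "\<dots> = \<nu> * (a \<bullet> lat v0)" by (simp add: ln1)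
    also have "a \<bullet> lat v0 = b" using s0 v0 S'G Ga by auto
    finally show ?thesis .
  qed
  have "\<nu> \<noteq> 0"
  proof
    assume "\<nu> = 0"
    then have "lat n1 = 0" using ln1 by simp
    then have "n1 = 0" by (rule lat_eq0)
    then show False using primitive_nonzero[OF n1(1)] by simp
  qed
  then consider "\<nu> < 0" | "\<nu> > 0" by linarith
  then show ?thesis
  proof cases
    case 1
    have "facet_normal P G n1 (- c1)"
      by (rule FN_from[OF n1(1) G a Pa Ga, of "-\<nu>"]) (use 1 ln1 c1 in auto)
    then show ?thesis by blast
  next
    case 2
    have "facet_normal P G (- n1) c1"
      by (rule FN_from[OF primitive_uminus[OF n1(1)] G a Pa Ga, of "\<nu>"]) (use 2 ln1 c1 in \<open>auto simp: lat_uminus\<close>)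
    then show ?thesis by blast
  qed
qed

end

locale prep =
  fixes P :: "(real^'d) set" and Fs :: "(real^'d) set set" and a :: "(real^'d) set \<Rightarrow> real^'d" and b
  assumes lp: "lattice_polytope P" and fd: "full_dimensional P"
    and finFs: "finite Fs" and PFs: "P = \<Inter>Fs"
    and hs: "\<forall>h\<in>Fs. a h \<noteq> 0 \<and> h = {x. a h \<bullet> x \<le> b h}"
    and facets: "\<forall>C. C facet_of P \<longleftrightarrow> (\<exists>h\<in>Fs. C = P \<inter> {x. a h \<bullet> x = b h})"
    and intP: "interior P = {x\<in>P. \<forall>h\<in>Fs. a h \<bullet> x < b h}"
begin

lemma memP: "y \<in> P \<longleftrightarrow> (\<forall>h\<in>Fs. a h \<bullet> y \<le> b h)"
proof -
  have "y \<in> h \<longleftrightarrow> a h \<bullet> y \<le> b h" if "h \<in> Fs" for h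
  proof -
    have "h = {x. a h \<bullet> x \<le> b h}" using hs that by blast
    then show ?thesis by (metis mem_Collect_eq)
  qed
  moreover have "y \<in> P \<longleftrightarrow> (\<forall>h\<in>Fs. y \<in> h)" by (simp add: PFs)
  ultimately show ?thesis by blast
qed

lemma a_nz: "h \<in> Fs \<Longrightarrow> a h \<noteq> 0" using hs by blast

lemma P_sub: "h \<in> Fs \<Longrightarrow> P \<subseteq> {x. a h \<bullet> x \<le> b h}"
  using memP by blast

lemma Fs_facet: "h \<in> Fs \<Longrightarrow> (P \<inter> {x. a h \<bullet> x = b h}) facet_of P"
  using facets by blast

lemma triple_rel:
  assumes fn: "facet_normal P G n h'"
  shows "\<exists>h\<in>Fs. G = P \<inter> {x. a h \<bullet> x = b h} \<and> (\<exists>t>0. lat n = (-t) *\<^sub>R a h \<and> of_int h' = t * b h)"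
proof -
  have "G facet_of P" using fn unfolding facet_normal_def by blast
  then obtain h where h: "h \<in> Fs" "G = P \<inter> {x. a h \<bullet> x = b h}" using facets by blast
  have "\<exists>t>0. lat n = (-t) *\<^sub>R a h \<and> of_int h' = t * b h"
    by (rule FN_prop[OF lp fd fn a_nz[OF h(1)] P_sub[OF h(1)] h(2)])
  then show ?thesis using h by blast
qed

lemma Fs_triple:
  assumes h: "h \<in> Fs"
  shows "\<exists>n h'. facet_normal P (P \<inter> {x. a h \<bullet> x = b h}) n h' \<and> (\<exists>t>0. lat n = (-t) *\<^sub>R a h \<and> of_int h' = t * b h)"
proof -
  obtain n h' where fn: "facet_normal P (P \<inter> {x. a h \<bullet> x = b h}) n h'"
    using FN_exists[OF lp fd Fs_facet[OF h]] by blast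
  have "\<exists>t>0. lat n = (-t) *\<^sub>R a h \<and> of_int h' = t * b h"
    by (rule FN_prop[OF lp fd fn a_nz[OF h] P_sub[OF h] refl])
  then show ?thesis using fn by blast
qed

lemma cone_iff: "(x, k) \<in> cone_P P \<longleftrightarrow> (\<forall>h\<in>Fs. a h \<bullet> x \<le> k * b h)"
proof
  assume c: "(x, k) \<in> cone_P P"
  show "\<forall>h\<in>Fs. a h \<bullet> x \<le> k * b h"
  proof
    fix h assume h: "h \<in> Fs"
    obtain n h' t where fn: "facet_normal P (P \<inter> {x. a h \<bullet> x = b h}) n h'" and t: "t > 0"
      "lat n = (-t) *\<^sub>R a h" "of_int h' = t * b h"
      using Fs_triple[OF h] by blast
    have "lat n \<bullet> x \<ge> - k * of_int h'" using c fn unfolding cone_P_def by blast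
    then have "t * (a h \<bullet> x) \<le> t * (k * b h)" using t by (simp add: algebra_simps)
    then show "a h \<bullet> x \<le> k * b h" using t by simp
  qed
next
  assume H: "\<forall>h\<in>Fs. a h \<bullet> x \<le> k * b h"
  show "(x, k) \<in> cone_P P"
    unfolding cone_P_def mem_Collect_eq case_prod_conv
  proof (intro allI impI)
    fix G n h' assume fn: "facet_normal P G n h'"
    obtain h t where h: "h \<in> Fs" and t: "t > 0" "lat n = (-t) *\<^sub>R a h" "of_int h' = t * b h"
      using triple_rel[OF fn] by blast
    have "t * (a h \<bullet> x) \<le> t * (k * b h)" using H h t by (simp add: mult_left_mono)
    then show "lat n \<bullet> x \<ge> - k * of_int h'" using t by (simp add: algebra_simps)
  qed
qed

lemma int_iff: "(x, k) \<in> int_cone_P P \<longleftrightarrow> (\<forall>h\<in>Fs. a h \<bullet> x < k * b h)"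
proof
  assume c: "(x, k) \<in> int_cone_P P"
  show "\<forall>h\<in>Fs. a h \<bullet> x < k * b h"
  proof
    fix h assume h: "h \<in> Fs"
    obtain n h' t where fn: "facet_normal P (P \<inter> {x. a h \<bullet> x = b h}) n h'" and t: "t > 0"
      "lat n = (-t) *\<^sub>R a h" "of_int h' = t * b h"
      using Fs_triple[OF h] by blast
    have "lat n \<bullet> x > - k * of_int h'" using c fn unfolding int_cone_P_def by blast
    then have "t * (a h \<bullet> x) < t * (k * b h)" using t by (simp add: algebra_simps)
    then show "a h \<bullet> x < k * b h" using t by simp
  qed
next
  assume H: "\<forall>h\<in>Fs. a h \<bullet> x < k * b h"
  show "(x, k) \<in> int_cone_P P"
    unfolding int_cone_P_def mem_Collect_eq case_prod_conv
  proof (intro allI impI)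
    fix G n h' assume fn: "facet_normal P G n h'"
    obtain h t where h: "h \<in> Fs" and t: "t > 0" "lat n = (-t) *\<^sub>R a h" "of_int h' = t * b h"
      using triple_rel[OF fn] by blast
    have "t * (a h \<bullet> x) < t * (k * b h)" using H h t by simp
    then show "lat n \<bullet> x > - k * of_int h'" using t by (simp add: algebra_simps)
  qed
qed

lemma rec0:
  assumes x: "\<forall>h\<in>Fs. a h \<bullet> x \<le> 0"
  shows "x = 0"
proof (rule ccontr)
  assume x0: "x \<noteq> 0"
  obtain p where p: "p \<in> P" using P_ne[OF lp fd] by blast
  have inP: "p + t *\<^sub>R x \<in> P" if t: "t \<ge> 0" for t
  proof -
    have "a h \<bullet> (p + t *\<^sub>R x) \<le> b h" if h: "h \<in> Fs" for h
    proof -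
      have "a h \<bullet> p \<le> b h" using p h memP by blast
      moreover have "t * (a h \<bullet> x) \<le> 0" using x h t by (simp add: mult_nonneg_nonpos)
      ultimately show ?thesis by (simp add: inner_add_right)
    qed
    then show ?thesis using memP by blast
  qed
  obtain B where B: "\<forall>y\<in>P. norm y \<le> B" using P_bdd[OF lp fd] bounded_iff by blast
  have Bp: "norm p \<le> B" using B p by blast
  define t where "t = (B + norm p + 1) / norm x"
  have nx: "norm x > 0" using x0 by simp
  have "B + norm p + 1 \<ge> 0" using Bp norm_ge_zero[of p] by linarith
  then have t0: "t \<ge> 0" unfolding t_def using nx by simp
  have tx: "t * norm x = B + norm p + 1" unfolding t_def using nx by simp
  have "norm (t *\<^sub>R x) \<le> norm (p + t *\<^sub>R x) + norm p"
    using norm_triangle_ineq4[of "p + t *\<^sub>R x" p] by simp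
  then have "B + norm p + 1 \<le> norm (p + t *\<^sub>R x) + norm p" using tx t0 by simp
  moreover have "norm (p + t *\<^sub>R x) \<le> B" using B inP[OF t0] by blast
  ultimately show False by linarith
qed

lemma Fs_ne: "Fs \<noteq> {}"
proof
  assume "Fs = {}"
  then have "P = UNIV" using memP by blast
  then show False using P_bdd[OF lp fd] by simp
qed

lemma cone_real: "(x, k) \<in> cone_P P \<longleftrightarrow> (k > 0 \<and> (1/k) *\<^sub>R x \<in> P) \<or> (k = 0 \<and> x = 0)"
proof (cases "k > 0")
  case True
  have "a h \<bullet> x \<le> k * b h \<longleftrightarrow> a h \<bullet> ((1/k) *\<^sub>R x) \<le> b h" for h
    using True by (simp add: field_simps)
  then show ?thesis using True by (simp add: cone_iff memP)
next
  case False
  show ?thesis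
  proof (cases "k = 0")
    case True
    then show ?thesis using rec0 by (auto simp: cone_iff)
  next
    case k0: False
    with False have kneg: "k < 0" by simp
    have "\<not> (\<forall>h\<in>Fs. a h \<bullet> x \<le> k * b h)"
    proof
      assume H: "\<forall>h\<in>Fs. a h \<bullet> x \<le> k * b h"
      define y where "y = (1 / (-k)) *\<^sub>R x"
      have ay: "a h \<bullet> y \<le> - b h" if "h \<in> Fs" for h
      proof -
        have "a h \<bullet> x \<le> k * b h" using H that by blast
        then have "(1/(-k)) * (a h \<bullet> x) \<le> (1/(-k)) * (k * b h)" using kneg by (intro mult_left_mono) auto
        then show ?thesis using kneg by (simp add: y_def)
      qed
      have "p = - y" if p: "p \<in> P" for p
      proof -
        have "\<forall>h\<in>Fs. a h \<bullet> (p + y) \<le> 0"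
        proof
          fix h assume h: "h \<in> Fs"
          have "a h \<bullet> p \<le> b h" using p h memP by blast
          then show "a h \<bullet> (p + y) \<le> 0" using ay[OF h] by (simp add: inner_add_right)
        qed
        then have "p + y = 0" by (rule rec0)
        then show ?thesis by (simp add: eq_neg_iff_add_eq_0)
      qed
      then have "P \<subseteq> {- y}" by blast
      then have "aff_dim P \<le> aff_dim {- y}" by (rule aff_dim_subset)
      then show False using P_aff[OF lp fd] by simp
    qed
    then show ?thesis using kneg by (simp add: cone_iff)
  qed
qed

lemma int_real: "(x, k) \<in> int_cone_P P \<longleftrightarrow> k > 0 \<and> (1/k) *\<^sub>R x \<in> interior P"
proof
  assume c: "(x, k) \<in> int_cone_P P"
  then have H: "\<forall>h\<in>Fs. a h \<bullet> x < k * b h" by (simp add: int_iff)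
  then have "\<forall>h\<in>Fs. a h \<bullet> x \<le> k * b h" by (simp add: less_imp_le)
  then have cc: "(x, k) \<in> cone_P P" by (simp add: cone_iff)
  have kpos: "k > 0"
  proof (rule ccontr)
    assume "\<not> k > 0"
    then have "k = 0 \<and> x = 0" using cc cone_real by blast
    moreover obtain h where "h \<in> Fs" using Fs_ne by blast
    ultimately show False using H by auto
  qed
  have "a h \<bullet> ((1/k) *\<^sub>R x) < b h" if "h \<in> Fs" for h
    using H that kpos by (simp add: field_simps)
  moreover then have "(1/k) *\<^sub>R x \<in> P" using memP by (simp add: less_imp_le)
  ultimately show "k > 0 \<and> (1/k) *\<^sub>R x \<in> interior P" using kpos by (simp add: intP)
next
  assume H: "k > 0 \<and> (1/k) *\<^sub>R x \<in> interior P"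
  then have "a h \<bullet> ((1/k) *\<^sub>R x) < b h" if "h \<in> Fs" for h
    using that by (simp add: intP)
  then have "a h \<bullet> x < k * b h" if "h \<in> Fs" for h
    using that H by (simp add: field_simps)
  then show "(x, k) \<in> int_cone_P P" by (simp add: int_iff)
qed


lemma ant_char_loc:
  assumes H: "\<And>p. p \<in> lat_pts (int_cone_P P) \<Longrightarrow> q + p \<in> lat_pts (cone_P P)"
  shows "q \<in> lat_pts (ant_cone_P P)"
  unfolding ant_pts
proof (intro allI impI, rule ccontr)
  fix F n h' assume fn: "facet_normal P F n h'" and neg: "\<not> lfun n h' q \<ge> -1"
  have qle: "lfun n h' q \<le> -2"
  proof -
    obtain m where m: "lfun n h' q = of_int m" using lfun_int by (blast elim: Ints_cases)
    then have "m < -1" using neg by simp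
    then have "m \<le> -2" by simp
    then show ?thesis using m by simp
  qed
  have Ff: "F facet_of P" and pn: "primitive n" and Fn: "F = {x\<in>P. lat n \<bullet> x = - of_int h'}"
    using fn unfolding facet_normal_def by auto
  obtain x0 :: "int^'d" where x0: "(\<Sum>i\<in>UNIV. n$i * x0$i) = 1" using primitive_bezout[OF pn] by blast
  obtain V where finV: "finite V" and PV: "P = convex hull (lat ` V)"
    using lp unfolding lattice_polytope_def by blast
  define W where "W = {v\<in>V. lat v \<in> F}"
  have finW: "finite W" using finV unfolding W_def by simp
  define Lz where "Lz h z = of_int (snd z) * b h - a h \<bullet> lat (fst z)" for h and z :: "(int^'d) \<times> int"
  define S where "S h = (\<Sum>v\<in>W. Lz h (v, 1))" for h
  define wv where "wv = (\<Sum>v\<in>W. v)"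
  define pN where "pN N = (x0 + int N *s wv, int N * int (card W))" for N :: nat
  have Lz_pN: "Lz h (pN N) = Lz h (x0, 0) + real N * S h" for h N
  proof -
    have Sh_eq: "S h = real (card W) * b h - a h \<bullet> lat wv"
      unfolding S_def Lz_def wv_def by (simp add: lat_sum inner_sum_right sum_subtractf)
    show ?thesis
      unfolding Sh_eq unfolding Lz_def pN_def by (simp add: lat_add lat_smult inner_add_right algebra_simps)
  qed
  have lfun_pN: "lfun n h' (pN N) = 1" for N
  proof -
    have lv: "lat n \<bullet> lat v = - of_int h'" if "v \<in> W" for v
      using that Fn unfolding W_def by blast
    have "lat n \<bullet> lat wv = (\<Sum>v\<in>W. lat n \<bullet> lat v)"
      unfolding wv_def by (simp add: lat_sum inner_sum_right)
    also have "\<dots> = - real (card W) * of_int h'" using lv by simp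
    finally have "lat n \<bullet> lat wv = - real (card W) * of_int h'" .
    moreover have "lat n \<bullet> lat x0 = 1" using x0 by (simp add: lat_inner)
    ultimately show ?thesis
      unfolding lfun_def pN_def by (simp add: lat_add lat_smult inner_add_right algebra_simps)
  qed
  have Lz_nonneg: "Lz h (v, 1) \<ge> 0" if "v \<in> V" "h \<in> Fs" for v h
  proof -
    have "lat v \<in> P" unfolding PV using that by (simp add: hull_inc)
    then show ?thesis using that memP unfolding Lz_def by auto
  qed
  have pos_other: "S h > 0" if h: "h \<in> Fs" and ne: "P \<inter> {x. a h \<bullet> x = b h} \<noteq> F" for h
  proof (rule ccontr)
    assume "\<not> S h > 0"
    moreover have nn: "\<forall>v\<in>W. Lz h (v, 1) \<ge> 0" using Lz_nonneg h unfolding W_def by blast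
    ultimately have "\<forall>v\<in>W. Lz h (v, 1) = 0"
      using sum_nonneg_eq_0_iff[OF finW, of "\<lambda>v. Lz h (v, 1)"] unfolding S_def
      by (metis sum_nonneg order.antisym not_less)
    then have latW: "lat ` W \<subseteq> P \<inter> {x. a h \<bullet> x = b h}"
      unfolding Lz_def W_def using Fn by auto
    obtain S' where S': "S' \<subseteq> lat ` V" "F = convex hull S'"
      using face_of_convex_hull_subset[of "lat ` V" F] finV Ff PV
      by (metis facet_of_imp_face_of finite_imageI finite_imp_compact)
    have S'F: "S' \<subseteq> F" unfolding S'(2) by (rule hull_subset)
    have "S' \<subseteq> lat ` W"
    proof
      fix s assume s: "s \<in> S'"
      have "s \<in> lat ` V" using S'(1) s by (rule subsetD)
      then obtain v where v: "v \<in> V" "s = lat v" by (rule imageE) auto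
      then have "v \<in> W" using s S'F unfolding W_def by blast
      then show "s \<in> lat ` W" using v by blast
    qed
    then have "S' \<subseteq> P \<inter> {x. a h \<bullet> x = b h}" using latW by (rule order_trans)
    moreover have cG: "convex (P \<inter> {x. a h \<bullet> x = b h})"
      by (rule convex_Int[OF P_conv[OF lp fd] convex_hyperplane])
    ultimately have FG: "F \<subseteq> P \<inter> {x. a h \<bullet> x = b h}" unfolding S'(2) by (rule hull_minimal)
    have "F face_of (P \<inter> {x. a h \<bullet> x = b h})"
      by (rule face_of_subset[OF facet_of_imp_face_of[OF Ff] FG]) blast
    then have "aff_dim F < aff_dim (P \<inter> {x. a h \<bullet> x = b h})"
      using face_of_aff_dim_lt[OF cG] ne by blast
    moreover have "aff_dim F = int CARD('d) - 1" by (rule facet_aff[OF lp fd Ff])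
    moreover have "aff_dim (P \<inter> {x. a h \<bullet> x = b h}) = int CARD('d) - 1"
      by (rule facet_aff[OF lp fd Fs_facet[OF h]])
    ultimately show False by simp
  qed
  have same: "Lz h (pN N) > 0" if h: "h \<in> Fs" and eq: "P \<inter> {x. a h \<bullet> x = b h} = F" for h N
  proof -
    obtain t where t: "t > 0" "lat n = (-t) *\<^sub>R a h" "of_int h' = t * b h"
      using FN_prop[OF lp fd fn a_nz[OF h] P_sub[OF h] eq[symmetric]] by blast
    have "lfun n h' z = t * Lz h z" for z
      unfolding lfun_def Lz_def using t by (simp add: algebra_simps)
    then have "t * Lz h (pN N) = 1" using lfun_pN[of N] by simp
    then have "Lz h (pN N) = 1 / t" using t(1) by (simp add: field_simps)
    then show ?thesis using t(1) by simp
  qed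
  define Fp where "Fp = {h\<in>Fs. S h > 0}"
  define R where "R = (\<Sum>h\<in>Fp. \<bar>Lz h (x0, 0)\<bar> / S h)"
  obtain N :: nat where N: "R < real N" using reals_Archimedean2 by blast
  have "Lz h (pN N) > 0" if h: "h \<in> Fs" for h
  proof (cases "P \<inter> {x. a h \<bullet> x = b h} = F")
    case True
    then show ?thesis using same h by blast
  next
    case False
    have Sh: "S h > 0" by (rule pos_other[OF h False])
    then have hFp: "h \<in> Fp" using h unfolding Fp_def by blast
    have "\<bar>Lz h (x0, 0)\<bar> / S h \<le> R"
      unfolding R_def using finFs hFp
      by (intro member_le_sum) (auto simp: Fp_def Sh)
    then have "\<bar>Lz h (x0, 0)\<bar> / S h < real N" using N by simp
    then have "\<bar>Lz h (x0, 0)\<bar> < real N * S h" using Sh by (simp add: divide_less_eq)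
    then show ?thesis using Lz_pN[of h N] by linarith
  qed
  then have "pN N \<in> lat_pts (int_cone_P P)"
    unfolding lat_pts_def Lz_def
    by (cases "pN N") (auto simp: int_iff)
  then have "q + pN N \<in> lat_pts (cone_P P)" by (rule H)
  then have "lfun n h' (q + pN N) \<ge> 0" using fn unfolding cone_pts by blast
  moreover have "lfun n h' (q + pN N) = lfun n h' q + 1" using lfun_pN[of N] by (simp add: lfun_add)
  ultimately show False using qle by linarith
qed

end

lemma img_scale: "(c::real) \<noteq> 0 \<Longrightarrow> y \<in> (\<lambda>x. c *\<^sub>R x) ` S \<longleftrightarrow> (1/c) *\<^sub>R y \<in> (S::(real^'d) set)"
proof
  assume c: "c \<noteq> 0" and "y \<in> (\<lambda>x. c *\<^sub>R x) ` S"
  then obtain x where "x \<in> S" "y = c *\<^sub>R x" by blast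
  moreover have "(1/c) *\<^sub>R (c *\<^sub>R x) = x" using c by (simp add: scaleR_scaleR)
  ultimately show "(1/c) *\<^sub>R y \<in> S" by simp
next
  assume c: "c \<noteq> 0" and "(1/c) *\<^sub>R y \<in> S"
  moreover have "y = c *\<^sub>R ((1/c) *\<^sub>R y)" using c by (simp add: scaleR_scaleR)
  ultimately show "y \<in> (\<lambda>x. c *\<^sub>R x) ` S" by blast
qed

lemma interior_scale: "(c::real) \<noteq> 0 \<Longrightarrow> interior ((\<lambda>x. c *\<^sub>R x) ` (S::(real^'d) set)) = (\<lambda>x. c *\<^sub>R x) ` interior S"
  by (rule interior_injective_linear_image) (auto simp: linear_scaleR inj_on_def)

context
  fixes P :: "(real^'d) set"
  assumes lp: "lattice_polytope P" and fd: "full_dimensional P"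
begin

lemma prep_ex: "\<exists>Fs a b. prep P Fs a b"
proof -
  from rep_exists[OF lp fd] obtain Fs a b where R: "finite Fs \<and> P = \<Inter>Fs \<and> (\<forall>h\<in>Fs. a h \<noteq> 0 \<and> h = {x. a h \<bullet> x \<le> b h}) \<and>
     (\<forall>C. C facet_of P \<longleftrightarrow> (\<exists>h\<in>Fs. C = P \<inter> {x. a h \<bullet> x = b h})) \<and>
     interior P = {x\<in>P. \<forall>h\<in>Fs. a h \<bullet> x < b h}"
    by (elim exE)
  have "prep P Fs a b"
    by (rule prep.intro[OF lp fd conjunct1[OF R] conjunct1[OF conjunct2[OF R]]
        conjunct1[OF conjunct2[OF conjunct2[OF R]]] conjunct1[OF conjunct2[OF conjunct2[OF conjunct2[OF R]]]]
        conjunct2[OF conjunct2[OF conjunct2[OF conjunct2[OF R]]]]])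
  then show ?thesis by blast
qed

lemma cone_char: "z \<in> lat_pts (cone_P P) \<longleftrightarrow> snd z \<ge> 0 \<and> lat (fst z) \<in> (\<lambda>x. real_of_int (snd z) *\<^sub>R x) ` P"
proof -
  obtain Fs a b where pr: "prep P Fs a b" using prep_ex by blast
  obtain v k where z: "z = (v, k)" by (cases z)
  have L: "z \<in> lat_pts (cone_P P) \<longleftrightarrow> (of_int k > (0::real) \<and> (1/of_int k) *\<^sub>R lat v \<in> P) \<or> (of_int k = (0::real) \<and> lat v = 0)"
    unfolding z lat_pts_def using prep.cone_real[OF pr] by simp
  show ?thesis
  proof (cases "k > 0")
    case True
    then show ?thesis using L z img_scale[of "real_of_int k" "lat v" P] by simp
  next
    case False
    show ?thesis
    proof (cases "k = 0")
      case True
      have "(\<lambda>x. real_of_int 0 *\<^sub>R x) ` P = {0}" using P_ne[OF lp fd] by auto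
      then show ?thesis using L z True by simp
    next
      case False
      then show ?thesis using L z \<open>\<not> k > 0\<close> by simp
    qed
  qed
qed

lemma int_char: "z \<in> lat_pts (int_cone_P P) \<longleftrightarrow> snd z \<ge> 1 \<and> lat (fst z) \<in> interior ((\<lambda>x. real_of_int (snd z) *\<^sub>R x) ` P)"
proof -
  obtain Fs a b where pr: "prep P Fs a b" using prep_ex by blast
  obtain v k where z: "z = (v, k)" by (cases z)
  have L: "z \<in> lat_pts (int_cone_P P) \<longleftrightarrow> of_int k > (0::real) \<and> (1/of_int k) *\<^sub>R lat v \<in> interior P"
    unfolding z lat_pts_def using prep.int_real[OF pr] by simp
  show ?thesis
  proof (cases "k > 0")
    case True
    then have "real_of_int k \<noteq> 0" by simp
    then show ?thesis using L z True img_scale[of "real_of_int k" "lat v" "interior P"] interior_scale[of "real_of_int k" P]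
      by simp
  next
    case False
    then show ?thesis using L z by simp
  qed
qed

lemma ant_char: "(\<And>p. p \<in> lat_pts (int_cone_P P) \<Longrightarrow> q + p \<in> lat_pts (cone_P P)) \<Longrightarrow> q \<in> lat_pts (ant_cone_P P)"
proof -
  assume H: "\<And>p. p \<in> lat_pts (int_cone_P P) \<Longrightarrow> q + p \<in> lat_pts (cone_P P)"
  obtain Fs a b where pr: "prep P Fs a b" using prep_ex by blast
  show ?thesis by (rule prep.ant_char_loc[OF pr H])
qed




lemma ehrhart_char: "f \<in> ehrhart_ring T P \<longleftrightarrow> Poly_Mapping.keys f \<subseteq> lat_pts (cone_P P)"
proof -
  have "{(v,k). k \<ge> 0 \<and> lat v \<in> (\<lambda>x. real_of_int k *\<^sub>R x) ` P} = lat_pts (cone_P P)"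
  proof (rule set_eqI)
    fix z :: "(int^'d) \<times> int"
    show "z \<in> {(v,k). k \<ge> 0 \<and> lat v \<in> (\<lambda>x. real_of_int k *\<^sub>R x) ` P} \<longleftrightarrow> z \<in> lat_pts (cone_P P)"
      by (cases z) (simp only: cone_char mem_Collect_eq case_prod_conv fst_conv snd_conv)
  qed
  then show ?thesis unfolding ehrhart_ring_def by simp
qed

lemma canon_char: "f \<in> canonical_module T P \<longleftrightarrow> Poly_Mapping.keys f \<subseteq> lat_pts (int_cone_P P)"
  unfolding canonical_module_def by simp

lemma cone_deg0: "(v, 0) \<in> lat_pts (cone_P P) \<Longrightarrow> v = 0"
  using cone_char[of "(v,0)"] by (auto simp: lat_def vec_eq_iff)

lemma single0_ehrhart: "Poly_Mapping.single 0 c \<in> ehrhart_ring T P"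
  unfolding ehrhart_char using zero_cone by auto

lemma single_int_ehrhart: "p \<in> lat_pts (int_cone_P P) \<Longrightarrow> Poly_Mapping.single p c \<in> ehrhart_ring T P"
  unfolding ehrhart_char by (simp add: int_cone)

lemma hom_add: "\<phi> \<in> hom_omega T P \<Longrightarrow> w1 \<in> canonical_module T P \<Longrightarrow> w2 \<in> canonical_module T P \<Longrightarrow> \<phi> (w1 + w2) = \<phi> w1 + \<phi> w2"
  unfolding hom_omega_def by blast

lemma hom_mult: "\<phi> \<in> hom_omega T P \<Longrightarrow> a \<in> ehrhart_ring T P \<Longrightarrow> w \<in> canonical_module T P \<Longrightarrow> \<phi> (a * w) = a * \<phi> w"
  unfolding hom_omega_def by blast

lemma hom_A: "\<phi> \<in> hom_omega T P \<Longrightarrow> w \<in> canonical_module T P \<Longrightarrow> \<phi> w \<in> ehrhart_ring T P"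
  unfolding hom_omega_def by blast

lemma single_canon: "p \<in> lat_pts (int_cone_P P) \<Longrightarrow> Poly_Mapping.single p c \<in> canonical_module T P"
  unfolding canon_char by auto

lemma hom_zero: "\<phi> \<in> hom_omega T P \<Longrightarrow> \<phi> 0 = 0"
proof -
  assume h: "\<phi> \<in> hom_omega T P"
  have z0: "0 \<in> canonical_module T P" unfolding canonical_module_def by simp
  have "\<phi> (0 + 0) = \<phi> 0 + \<phi> 0" by (rule hom_add[OF h z0 z0])
  then show ?thesis by simp
qed

lemma hom_sum:
  assumes h: "\<phi> \<in> hom_omega T P" and fin: "finite S" and S: "\<And>s. s \<in> S \<Longrightarrow> g s \<in> canonical_module T P"
  shows "\<phi> (\<Sum>s\<in>S. g s) = (\<Sum>s\<in>S. \<phi> (g s))"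
  using fin S
proof (induction S rule: finite_induct)
  case empty then show ?case using hom_zero[OF h] by simp
next
  case (insert x F)
  have gx: "g x \<in> canonical_module T P" using insert by auto
  have gF: "(\<Sum>s\<in>F. g s) \<in> canonical_module T P"
  proof -
    have "Poly_Mapping.keys (\<Sum>s\<in>F. g s) \<subseteq> (\<Union>s\<in>F. Poly_Mapping.keys (g s))" by (rule keys_sum)
    also have "\<dots> \<subseteq> lat_pts (int_cone_P P)" using insert.prems by (auto simp: canon_char)
    finally show ?thesis by (simp add: canon_char)
  qed
  have "\<phi> (\<Sum>s\<in>insert x F. g s) = \<phi> (g x + (\<Sum>s\<in>F. g s))" using insert by simp
  also have "\<dots> = \<phi> (g x) + \<phi> (\<Sum>s\<in>F. g s)" using h gx gF by (rule hom_add)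
  also have "\<dots> = \<phi> (g x) + (\<Sum>s\<in>F. \<phi> (g s))" using insert by simp
  finally show ?case using insert by simp
qed

lemma hom_keys_single:
  assumes h: "\<phi> \<in> hom_omega (T::'k::field itself) P" and w: "w \<in> canonical_module T P" and z: "z \<in> Poly_Mapping.keys (\<phi> w)"
  shows "\<exists>p\<in>Poly_Mapping.keys w. z \<in> Poly_Mapping.keys (\<phi> (Poly_Mapping.single p (1::'k)))"
proof -
  have wk: "Poly_Mapping.keys w \<subseteq> lat_pts (int_cone_P P)" using w by (simp add: canon_char)
  have "\<phi> w = \<phi> (\<Sum>p\<in>Poly_Mapping.keys w. Poly_Mapping.single p (Poly_Mapping.lookup w p))"
    by (subst poly_mapping_monomials[of w]) rule
  also have "\<dots> = (\<Sum>p\<in>Poly_Mapping.keys w. \<phi> (Poly_Mapping.single p (Poly_Mapping.lookup w p)))"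
    using wk by (intro hom_sum[OF h]) (auto intro: single_canon)
  also have "\<dots> = (\<Sum>p\<in>Poly_Mapping.keys w. Poly_Mapping.single 0 (Poly_Mapping.lookup w p) * \<phi> (Poly_Mapping.single p 1))"
  proof (rule sum.cong[OF refl])
    fix p assume p: "p \<in> Poly_Mapping.keys w"
    have "\<phi> (Poly_Mapping.single 0 (Poly_Mapping.lookup w p) * Poly_Mapping.single p 1) =
       Poly_Mapping.single 0 (Poly_Mapping.lookup w p) * \<phi> (Poly_Mapping.single p 1)"
      using p wk by (intro hom_mult[OF h] single0_ehrhart single_canon) auto
    then show "\<phi> (Poly_Mapping.single p (Poly_Mapping.lookup w p)) = Poly_Mapping.single 0 (Poly_Mapping.lookup w p) * \<phi> (Poly_Mapping.single p 1)"
      by (simp add: mult_single)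
  qed
  finally have eq: "\<phi> w = (\<Sum>p\<in>Poly_Mapping.keys w. Poly_Mapping.single 0 (Poly_Mapping.lookup w p) * \<phi> (Poly_Mapping.single p 1))" .
  have "z \<in> Poly_Mapping.keys (\<Sum>p\<in>Poly_Mapping.keys w. Poly_Mapping.single 0 (Poly_Mapping.lookup w p) * \<phi> (Poly_Mapping.single p 1))"
    using z by (simp only: eq)
  then obtain p where p: "p \<in> Poly_Mapping.keys w" and zz: "z \<in> Poly_Mapping.keys (Poly_Mapping.single 0 (Poly_Mapping.lookup w p) * \<phi> (Poly_Mapping.single p 1))"
    using keys_sum[of "\<lambda>p. Poly_Mapping.single 0 (Poly_Mapping.lookup w p) * \<phi> (Poly_Mapping.single p 1)" "Poly_Mapping.keys w"] by blast
  have "z \<in> (\<lambda>b. 0 + b) ` Poly_Mapping.keys (\<phi> (Poly_Mapping.single p 1))"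
    using zz keys_single_mult[of 0 "Poly_Mapping.lookup w p" "\<phi> (Poly_Mapping.single p 1)"] by blast
  then have "z \<in> Poly_Mapping.keys (\<phi> (Poly_Mapping.single p 1))" by simp
  then show ?thesis using p by blast
qed

lemma hom_key_decomp:
  assumes h: "\<phi> \<in> hom_omega (T::'k::field itself) P" and p: "p \<in> lat_pts (int_cone_P P)"
    and z: "z \<in> Poly_Mapping.keys (\<phi> (Poly_Mapping.single p (1::'k)))"
  shows "z - p \<in> lat_pts (ant_cone_P P)"
proof (rule ant_char)
  fix p' assume p': "p' \<in> lat_pts (int_cone_P P)"
  have A: "Poly_Mapping.single p' (1::'k) \<in> ehrhart_ring T P" using single_int_ehrhart[OF p'] .
  have A2: "Poly_Mapping.single p (1::'k) \<in> ehrhart_ring T P" using single_int_ehrhart[OF p] .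
  have W: "Poly_Mapping.single p (1::'k) \<in> canonical_module T P" using single_canon[OF p] .
  have W2: "Poly_Mapping.single p' (1::'k) \<in> canonical_module T P" using single_canon[OF p'] .
  have "Poly_Mapping.single p' 1 * \<phi> (Poly_Mapping.single p 1) = \<phi> (Poly_Mapping.single p' 1 * Poly_Mapping.single p 1)"
    using hom_mult[OF h A W] by simp
  also have "\<dots> = \<phi> (Poly_Mapping.single p 1 * Poly_Mapping.single p' 1)" by (simp add: mult.commute)
  also have "\<dots> = Poly_Mapping.single p 1 * \<phi> (Poly_Mapping.single p' 1)"
    using hom_mult[OF h A2 W2] by simp
  finally have eq: "Poly_Mapping.single p' 1 * \<phi> (Poly_Mapping.single p 1) = Poly_Mapping.single p 1 * \<phi> (Poly_Mapping.single p' (1::'k))" .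
  have "Poly_Mapping.lookup (Poly_Mapping.single p' 1 * \<phi> (Poly_Mapping.single p 1)) (p' + z) \<noteq> 0"
    using z by (simp add: lookup_single_mult in_keys_iff)
  moreover have "p + (z - p + p') = p' + z" by (simp add: algebra_simps)
  ultimately have "Poly_Mapping.lookup (Poly_Mapping.single p 1 * \<phi> (Poly_Mapping.single p' (1::'k))) (p + (z - p + p')) \<noteq> 0"
    by (simp only: eq not_False_eq_True)
  then have "z - p + p' \<in> Poly_Mapping.keys (\<phi> (Poly_Mapping.single p' (1::'k)))"
    by (simp only: lookup_single_mult in_keys_iff not_False_eq_True)
  moreover have "\<phi> (Poly_Mapping.single p' 1) \<in> ehrhart_ring T P" using hom_A[OF h W2] .
  ultimately show "z - p + p' \<in> lat_pts (cone_P P)" by (auto simp: ehrhart_char)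
qed

lemma hom_keys_decomp:
  assumes h: "\<phi> \<in> hom_omega (T::'k::field itself) P" and w: "w \<in> canonical_module T P" and z: "z \<in> Poly_Mapping.keys (\<phi> w)"
  shows "\<exists>p q. z = p + q \<and> p \<in> lat_pts (int_cone_P P) \<and> q \<in> lat_pts (ant_cone_P P)"
proof -
  obtain p where p: "p \<in> Poly_Mapping.keys w" and zp: "z \<in> Poly_Mapping.keys (\<phi> (Poly_Mapping.single p (1::'k)))"
    using hom_keys_single[OF h w z] by blast
  have pi: "p \<in> lat_pts (int_cone_P P)" using p w by (auto simp: canon_char)
  show ?thesis using hom_key_decomp[OF h pi zp] pi by (intro exI[of _ p] exI[of _ "z - p"]) auto
qed

lemma trace_keys_decomp:
  assumes f: "f \<in> trace_omega (T::'k::field itself) P" and z: "z \<in> Poly_Mapping.keys f"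
  shows "\<exists>p q. z = p + q \<and> p \<in> lat_pts (int_cone_P P) \<and> q \<in> lat_pts (ant_cone_P P)"
proof -
  obtain N \<phi> w where fe: "f = (\<Sum>i<(N::nat). \<phi> i (w i))" and hw: "\<forall>i<N. \<phi> i \<in> hom_omega T P \<and> w i \<in> canonical_module T P"
    using f unfolding trace_omega_def by blast
  obtain i where "i < N" "z \<in> Poly_Mapping.keys (\<phi> i (w i))"
    using z keys_sum[of "\<lambda>i. \<phi> i (w i)" "{..<N}"] fe by auto
  then show ?thesis using hom_keys_decomp hw by blast
qed

lemma trace_zero: "0 \<in> trace_omega T P"
  unfolding trace_omega_def by (rule CollectI, rule exI[of _ 0]) auto

lemma trace_single: "\<phi> \<in> hom_omega T P \<Longrightarrow> w \<in> canonical_module T P \<Longrightarrow> \<phi> w \<in> trace_omega T P"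
  unfolding trace_omega_def
  by (rule CollectI, rule exI[of _ 1], rule exI[of _ "\<lambda>_. \<phi>"], rule exI[of _ "\<lambda>_. w"]) auto

lemma sum_lessThan_split: "(\<Sum>i<m+n. f i) = (\<Sum>i<m. f i) + (\<Sum>i<(n::nat). f (m+i))"
  by (induction n) (auto simp: add.assoc)

lemma trace_add:
  assumes "f \<in> trace_omega T P" "g \<in> trace_omega T P"
  shows "f + g \<in> trace_omega T P"
proof -
  obtain N1 \<phi>1 w1 where f: "f = (\<Sum>i<(N1::nat). \<phi>1 i (w1 i))" and h1: "\<forall>i<N1. \<phi>1 i \<in> hom_omega T P \<and> w1 i \<in> canonical_module T P"
    using assms(1) unfolding trace_omega_def by blast
  obtain N2 \<phi>2 w2 where g: "g = (\<Sum>i<(N2::nat). \<phi>2 i (w2 i))" and h2: "\<forall>i<N2. \<phi>2 i \<in> hom_omega T P \<and> w2 i \<in> canonical_module T P"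
    using assms(2) unfolding trace_omega_def by blast
  define \<phi> where "\<phi> i = (if i < N1 then \<phi>1 i else \<phi>2 (i - N1))" for i
  define w where "w i = (if i < N1 then w1 i else w2 (i - N1))" for i
  have "(\<Sum>i<N1 + N2. \<phi> i (w i)) = (\<Sum>i<N1. \<phi> i (w i)) + (\<Sum>i<N2. \<phi> (N1 + i) (w (N1 + i)))"
    by (rule sum_lessThan_split)
  also have "\<dots> = f + g" by (simp add: f g \<phi>_def w_def)
  finally have "f + g = (\<Sum>i<N1 + N2. \<phi> i (w i))" by simp
  moreover have "\<forall>i<N1+N2. \<phi> i \<in> hom_omega T P \<and> w i \<in> canonical_module T P"
    using h1 h2 by (auto simp: \<phi>_def w_def)
  ultimately show ?thesis unfolding trace_omega_def by blast
qed

lemma trace_sum: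
  "finite S \<Longrightarrow> (\<And>s. s \<in> S \<Longrightarrow> g s \<in> trace_omega T P) \<Longrightarrow> (\<Sum>s\<in>S. g s) \<in> trace_omega T P"
  by (induction S rule: finite_induct) (auto intro: trace_zero trace_add)

lemma mult_hom:
  assumes q: "q \<in> lat_pts (ant_cone_P P)"
  shows "(\<lambda>w. Poly_Mapping.single q c * w) \<in> hom_omega T P"
  unfolding hom_omega_def
proof (intro CollectI conjI ballI)
  fix w assume w: "w \<in> canonical_module T P"
  have "Poly_Mapping.keys (Poly_Mapping.single q c * w) \<subseteq> (\<lambda>b. q + b) ` Poly_Mapping.keys w"
    by (rule keys_single_mult)
  also have "\<dots> \<subseteq> lat_pts (cone_P P)"
    using w q int_ant_cone[of _ P q] by (auto simp: canon_char add.commute)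
  finally show "Poly_Mapping.single q c * w \<in> ehrhart_ring T P" by (simp add: ehrhart_char)
qed (auto simp: algebra_simps)

theorem part1:
  "nearly_gorenstein (T::'k::field itself) P \<longleftrightarrow>
           lat_pts (cone_P P) - {0} \<subseteq>
             {p + q | p q. p \<in> lat_pts (int_cone_P P) \<and> q \<in> lat_pts (ant_cone_P P)}"
proof
  assume ng: "nearly_gorenstein T P"
  show "lat_pts (cone_P P) - {0} \<subseteq> {p + q | p q. p \<in> lat_pts (int_cone_P P) \<and> q \<in> lat_pts (ant_cone_P P)}"
  proof
    fix z assume z: "z \<in> lat_pts (cone_P P) - {0}"
    obtain v k where zv: "z = (v, k)" by (cases z)
    have k0: "k \<ge> 0" using z zv cone_char by auto
    have "k \<noteq> 0" using z zv cone_deg0 by (auto simp: zero_prod_def)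
    with k0 have kpos: "k > 0" by simp
    have "Poly_Mapping.single z (1::'k) \<in> max_ideal T P"
      unfolding max_ideal_def using z kpos zv by (auto simp: ehrhart_char)
    with ng have "Poly_Mapping.single z (1::'k) \<in> trace_omega T P"
      unfolding nearly_gorenstein_def by blast
    from trace_keys_decomp[OF this] show "z \<in> {p + q | p q. p \<in> lat_pts (int_cone_P P) \<and> q \<in> lat_pts (ant_cone_P P)}"
      by auto
  qed
next
  assume dec: "lat_pts (cone_P P) - {0} \<subseteq> {p + q | p q. p \<in> lat_pts (int_cone_P P) \<and> q \<in> lat_pts (ant_cone_P P)}"
  show "nearly_gorenstein T P"
    unfolding nearly_gorenstein_def
  proof
    fix f assume f: "f \<in> max_ideal T P"
    have "f \<in> ehrhart_ring T P" using f by (simp add: max_ideal_def)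
    then have fk: "Poly_Mapping.keys f \<subseteq> lat_pts (cone_P P)" by (simp only: ehrhart_char)
    have "Poly_Mapping.single z (Poly_Mapping.lookup f z) \<in> trace_omega T P" if z: "z \<in> Poly_Mapping.keys f" for z
    proof -
      have "\<forall>(v,k)\<in>Poly_Mapping.keys f. k > 0" using f by (simp add: max_ideal_def)
      then have "snd z > 0" using z by (cases z) auto
      then have "z \<noteq> 0" by (auto simp: zero_prod_def)
      then have "z \<in> lat_pts (cone_P P) - {0}" using z fk by blast
      then have "z \<in> {p + q | p q. p \<in> lat_pts (int_cone_P P) \<and> q \<in> lat_pts (ant_cone_P P)}"
        using dec by (rule subsetD[rotated])
      then obtain p q where zpq: "z = p + q" and p: "p \<in> lat_pts (int_cone_P P)" and q: "q \<in> lat_pts (ant_cone_P P)"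
        by blast
      have "Poly_Mapping.single q (Poly_Mapping.lookup f z) * Poly_Mapping.single p 1 \<in> trace_omega T P"
        by (rule trace_single[OF mult_hom[OF q] single_canon[OF p]])
      moreover have "Poly_Mapping.single q (Poly_Mapping.lookup f z) * Poly_Mapping.single p 1 = Poly_Mapping.single (q + p) (Poly_Mapping.lookup f z * 1)"
        by (rule mult_single)
      moreover have "q + p = z" using zpq add.commute[of p q] by simp
      ultimately show ?thesis by (simp only: mult_1_right)
    qed
    then have "(\<Sum>z\<in>Poly_Mapping.keys f. Poly_Mapping.single z (Poly_Mapping.lookup f z)) \<in> trace_omega T P"
      by (intro trace_sum) (rule finite_keys)
    moreover have feq: "f = (\<Sum>z\<in>Poly_Mapping.keys f. Poly_Mapping.single z (Poly_Mapping.lookup f z))"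
      by (rule poly_mapping_monomials)
    ultimately show "f \<in> trace_omega T P" by (simp only: feq[symmetric])
  qed
qed


lemma slice_iff: "v \<in> slice_lat X k \<longleftrightarrow> (v, k) \<in> lat_pts X"
  by (simp add: slice_lat_def lat_pts_def)

lemma scale1: "(\<lambda>x. real_of_int 1 *\<^sub>R x) ` P = P"
  by simp

lemma codegree_props:
  assumes xk: "(x, k) \<in> lat_pts (int_cone_P P)"
  shows "int (codegree P) \<le> k" "codegree P \<ge> 1" "\<exists>z. (z, int (codegree P)) \<in> lat_pts (int_cone_P P)"
proof -
  define Q where "Q = (\<lambda>k::nat. k \<ge> 1 \<and> (\<exists>v. lat v \<in> interior ((\<lambda>x. real k *\<^sub>R x) ` P)))"
  have k1: "k \<ge> 1" and kin: "lat x \<in> interior ((\<lambda>y. real_of_int k *\<^sub>R y) ` P)"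
    using xk int_char[of "(x,k)"] by auto
  have "real (nat k) = real_of_int k" using k1 by simp
  then have Qk: "Q (nat k)" using k1 kin unfolding Q_def by (intro conjI exI[of _ x]) auto
  have cd: "codegree P = (LEAST k. Q k)" unfolding codegree_def Q_def by simp
  have "codegree P \<le> nat k" unfolding cd by (rule Least_le[of Q, OF Qk])
  then show "int (codegree P) \<le> k" using k1 by simp
  have Qc: "Q (codegree P)" unfolding cd by (rule LeastI[of Q, OF Qk])
  then show "codegree P \<ge> 1" unfolding Q_def by simp
  from Qc obtain z where z: "lat z \<in> interior ((\<lambda>y. real (codegree P) *\<^sub>R y) ` P)" and c1: "codegree P \<ge> 1"
    unfolding Q_def by blast
  have "(z, int (codegree P)) \<in> lat_pts (int_cone_P P)"
    using z c1 by (subst int_char) simp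
  then show "\<exists>z. (z, int (codegree P)) \<in> lat_pts (int_cone_P P)" by blast
qed

theorem part2:
  assumes ng: "nearly_gorenstein (T::'k::field itself) P"
  shows "{v. lat v \<in> P} =
             {u + w | u w. u \<in> slice_lat (int_cone_P P) (int (codegree P)) \<and>
                           w \<in> slice_lat (ant_cone_P P) (1 - int (codegree P))}"
proof (rule set_eqI, rule iffI)
  fix v assume "v \<in> {v. lat v \<in> P}"
  then have vP: "lat v \<in> P" by simp
  have vc: "(v, 1) \<in> lat_pts (cone_P P)" using vP by (subst cone_char) simp
  have "(v, 1::int) \<noteq> 0" by (simp add: zero_prod_def)
  with vc part1[of T] ng obtain p q where pq: "(v, 1) = p + q" and p: "p \<in> lat_pts (int_cone_P P)" and q: "q \<in> lat_pts (ant_cone_P P)"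
    by blast
  obtain x k where px: "p = (x, k)" by (cases p)
  obtain y l where qy: "q = (y, l)" by (cases q)
  have vxy: "v = x + y" and l: "l = 1 - k" using pq px qy by auto
  define a where "a = int (codegree P)"
  have ak: "a \<le> k" using codegree_props(1)[of x k] p px a_def by simp
  obtain z where z: "(z, a) \<in> lat_pts (int_cone_P P)" using codegree_props(3)[of x k] p px a_def by blast
  have "q + (z, a) \<in> lat_pts (cone_P P)" using int_ant_cone[OF z q] by (simp add: add.commute)
  then have "1 - k + a \<ge> 0" using cone_char[of "q + (z,a)"] qy l by simp
  then consider "k = a" | "k = a + 1" using ak by linarith
  then show "v \<in> {u + w | u w. u \<in> slice_lat (int_cone_P P) a \<and> w \<in> slice_lat (ant_cone_P P) (1 - a)}"
  proof cases
    case 1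
    then show ?thesis using p q px qy l vxy by (auto simp: slice_iff)
  next
    case 2
    have "(y + z, 0) \<in> lat_pts (cone_P P)" using int_ant_cone[OF z q] qy l 2 by (simp add: add.commute)
    then have yz: "y + z = 0" by (rule cone_deg0)
    have "(v - z, 1 - a) \<in> lat_pts (ant_cone_P P)"
      unfolding ant_pts
    proof (intro allI impI)
      fix F n h assume fn: "facet_normal P F n h"
      have z1: "lfun n h (z, a) \<ge> 1" using z fn unfolding int_pts_ge1 by blast
      have qa: "lfun n h (y, -a) \<ge> -1" using q fn qy l 2 unfolding ant_pts by auto
      have "(y, -a) + (z, a) = 0" using yz by (simp add: zero_prod_def)
      then have "lfun n h (y, -a) + lfun n h (z, a) = 0" using lfun_add[of n h "(y,-a)" "(z,a)"] by simp
      moreover have "lfun n h (v, 1) \<ge> 0" using vc fn unfolding cone_pts by blast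
      moreover have "lfun n h (v, 1) = lfun n h (z, a) + lfun n h (v - z, 1 - a)"
      proof -
        have "(v, 1) = (z, a) + (v - z, 1 - a)" by simp
        then show ?thesis by (metis lfun_add)
      qed
      ultimately show "lfun n h (v - z, 1 - a) \<ge> -1" using z1 qa by linarith
    qed
    moreover have "v = z + (v - z)" by simp
    ultimately show ?thesis using z unfolding slice_iff by blast
  qed
next
  fix v assume "v \<in> {u + w | u w. u \<in> slice_lat (int_cone_P P) (int (codegree P)) \<and>
                           w \<in> slice_lat (ant_cone_P P) (1 - int (codegree P))}"
  then obtain u w where v: "v = u + w" and u: "(u, int (codegree P)) \<in> lat_pts (int_cone_P P)"
     and w: "(w, 1 - int (codegree P)) \<in> lat_pts (ant_cone_P P)"
    by (auto simp: slice_iff)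
  have "(u, int (codegree P)) + (w, 1 - int (codegree P)) \<in> lat_pts (cone_P P)"
    by (rule int_ant_cone[OF u w])
  then have "(v, 1) \<in> lat_pts (cone_P P)" using v by simp
  then show "v \<in> {v. lat v \<in> P}" using cone_char[of "(v,1)"] by simp
qed

lemma cone_sum: "finite I \<Longrightarrow> (\<And>i. i \<in> I \<Longrightarrow> f i \<in> lat_pts (cone_P P)) \<Longrightarrow> sum f I \<in> lat_pts (cone_P P)"
  by (induction I rule: finite_induct) (auto intro: cone_cone zero_cone)

theorem part3:
  assumes idp: "IDP P"
    and sl: "{v. lat v \<in> P} =
             {u + w | u w. u \<in> slice_lat (int_cone_P P) (int (codegree P)) \<and>
                           w \<in> slice_lat (ant_cone_P P) (1 - int (codegree P))}"
  shows "lat_pts (cone_P P) - {0} \<subseteq>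
             {p + q | p q. p \<in> lat_pts (int_cone_P P) \<and> q \<in> lat_pts (ant_cone_P P)}"
proof
  fix z assume z: "z \<in> lat_pts (cone_P P) - {0}"
  obtain x k where zx: "z = (x, k)" by (cases z)
  have k0: "k \<ge> 0" and xk: "lat x \<in> (\<lambda>y. real_of_int k *\<^sub>R y) ` P" using z zx cone_char by auto
  have "k \<noteq> 0" using z zx cone_deg0 by (auto simp: zero_prod_def)
  with k0 have k1: "k \<ge> 1" by simp
  define K where "K = nat k"
  have K1: "K \<ge> 1" and rK: "real K = real_of_int k" using k1 by (auto simp: K_def)
  obtain u where u: "\<forall>i<K. lat (u i) \<in> P" and xu: "x = (\<Sum>i<K. u i)"
    using idp K1 xk rK unfolding IDP_def by metis
  have "u 0 \<in> {v. lat v \<in> P}" using u K1 by simp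
  then obtain s t where u0: "u 0 = s + t" and s: "(s, int (codegree P)) \<in> lat_pts (int_cone_P P)"
     and t: "(t, 1 - int (codegree P)) \<in> lat_pts (ant_cone_P P)"
    unfolding sl by (auto simp: slice_iff)
  define r where "r = (\<Sum>i\<in>{1..<K}. (u i, 1::int))"
  have rc: "r \<in> lat_pts (cone_P P)"
    unfolding r_def
  proof (rule cone_sum)
    fix i assume "i \<in> {1..<K}"
    then have "lat (u i) \<in> P" using u by auto
    then show "(u i, 1) \<in> lat_pts (cone_P P)" by (subst cone_char) simp
  qed simp
  have "{..<K} = insert 0 {1..<K}" using K1 by auto
  then have sumK: "(\<Sum>i<K. (u i, 1::int)) = (u 0, 1) + r" unfolding r_def by simp
  have "(\<Sum>i<K. (u i, 1::int)) = (x, k)"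
    using xu rK K1 by (simp add: prod_eq_iff fst_sum snd_sum K_def)
  then have zr: "z = (u 0, 1) + r" using sumK zx by simp
  have "(t, 1 - int (codegree P)) + r \<in> lat_pts (ant_cone_P P)" by (rule ant_cone_ant[OF t rc])
  moreover have "z = (s, int (codegree P)) + ((t, 1 - int (codegree P)) + r)"
    using zr u0 by (simp add: algebra_simps)
  ultimately show "z \<in> {p + q | p q. p \<in> lat_pts (int_cone_P P) \<and> q \<in> lat_pts (ant_cone_P P)}"
    using s by blast
qed

end

theorem proposition3p2:
  fixes P :: "(real^'d) set"
  assumes kinf: "infinite (UNIV :: 'k::field set)"
    and lp: "lattice_polytope P" and fd: "full_dimensional P"
  shows "(nearly_gorenstein TYPE('k) P \<longleftrightarrow>
           lat_pts (cone_P P) - {0} \<subseteq>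
             {p + q | p q. p \<in> lat_pts (int_cone_P P) \<and> q \<in> lat_pts (ant_cone_P P)})
    \<and> (nearly_gorenstein TYPE('k) P \<longrightarrow>
           {v. lat v \<in> P} =
             {u + w | u w. u \<in> slice_lat (int_cone_P P) (int (codegree P)) \<and>
                           w \<in> slice_lat (ant_cone_P P) (1 - int (codegree P))})
    \<and> (IDP P \<and>
           {v. lat v \<in> P} =
             {u + w | u w. u \<in> slice_lat (int_cone_P P) (int (codegree P)) \<and>
                           w \<in> slice_lat (ant_cone_P P) (1 - int (codegree P))} \<longrightarrow>
           nearly_gorenstein TYPE('k) P)"
  using part1[OF lp fd, of "TYPE('k)"] part2[OF lp fd, of "TYPE('k)"] part3[OF lp fd]
  by blast

end
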